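(* For $\eta>0$ and $x,y\in\mathbf{R}^3$ let $$\mathcal{R}_0(\eta;x,y)=\frac{1}{1+2\eta^2}\cdot\frac{e^{i\eta|x-y|}-e^{-i\eta|x-y|}}{4\pi|x-y|}.$$ Then for $t>1$, $$\sup_{x,y\in\mathbf{R}^3}\Big|\int_0^\infty e^{-it(\eta^4+\eta^2)}\mathcal{R}_0(\eta;x,y)(4\eta^3+2\eta)\,d\eta\Big|\lesssim |t|^{-3/2},$$ and for $0<t\le1$ the same supremum is $\lesssim|t|^{-3/4}$.
   Context: $\mathcal{R}_0(\eta;x,y)=R_0^+(\lambda;x,y)-R_0^-(\lambda;x,y)$ with $\lambda=\eta^4+\eta^2$, where $R_0^\pm(\lambda)=\lim_{\epsilon\downarrow0}(\Delta^2-\Delta-(\lambda\pm i\epsilon))^{-1}$ on $\mathbf{R}^3$ has kernel $R_0^\pm(\lambda;x,y)=\frac{1}{1+2\eta^2}\Big(\frac{e^{\pm i\eta|x-y|}}{4\pi|x-y|}-\frac{e^{-\sqrt{1+\eta^2}|x-y|}}{4\pi|x-y|}\Big)$, $\eta=(\sqrt{1/4+\lambda}-1/2)^{1/2}$. The integral over $(0,\infty)$ is understood as an (improper) oscillatory integral. *)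

theory Defs
  imports "HOL-Analysis.Analysis"
begin

text \<open>Kernel of the spectral difference R_0^+ - R_0^-, as a function of eta and r = |x - y|.
  At r = 0 it is given by its continuous extension (limit r -> 0).\<close>
definition calR0 :: "real \<Rightarrow> real \<Rightarrow> complex" where
  "calR0 \<eta> r = complex_of_real (1 / (1 + 2 * \<eta>\<^sup>2)) *
     (if r = 0 then 2 * \<i> * complex_of_real \<eta> / complex_of_real (4 * pi)
      else (exp (\<i> * complex_of_real (\<eta> * r)) - exp (- \<i> * complex_of_real (\<eta> * r)))
           / complex_of_real (4 * pi * r))"

definition osc_integrand :: "real \<Rightarrow> real \<Rightarrow> real \<Rightarrow> complex" where
  "osc_integrand t r \<eta> = exp (- \<i> * complex_of_real (t * (\<eta> ^ 4 + \<eta>\<^sup>2))) * calR0 \<eta> r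
     * complex_of_real (4 * \<eta> ^ 3 + 2 * \<eta>)"

end

theory Submission
  imports Defs
begin

definition EE :: "real \<Rightarrow> complex" where "EE x = exp (- \<i> * complex_of_real x)"

lemma norm_EE[simp]: "norm (EE x) = 1"
  unfolding EE_def by (simp add: norm_exp_eq_Re)

lemma continuous_EE[continuous_intros]:
  "continuous_on S f \<Longrightarrow> continuous_on S (\<lambda>x. EE (f x))"
  unfolding EE_def by (intro continuous_intros)

lemma EE_deriv:
  assumes "(\<psi> has_real_derivative d) (at x within S)"
  shows "((\<lambda>x. EE (\<psi> x)) has_vector_derivative (- \<i> * complex_of_real d * EE (\<psi> x))) (at x within S)"
proof -
  have 1: "((\<lambda>x. - \<i> * complex_of_real (\<psi> x)) has_vector_derivative (- \<i> * complex_of_real d)) (at x within S)"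
    using assms by (auto intro!: derivative_eq_intros)
  have 2: "(exp has_field_derivative exp (- \<i> * complex_of_real (\<psi> x))) (at (- \<i> * complex_of_real (\<psi> x)) within (\<lambda>x. - \<i> * complex_of_real (\<psi> x)) ` S)"
    by (intro derivative_eq_intros) auto
  show ?thesis using field_vector_diff_chain_within[OF 1 2]
    by (simp add: EE_def o_def)
qed

lemma deriv_cont_on:
  assumes "\<And>x. (f has_real_derivative f' x) (at x)"
  shows "continuous_on S f"
  by (meson DERIV_isCont assms continuous_at_imp_continuous_on)

lemma vdc1:
  fixes \<psi> \<psi>1 \<psi>2 :: "real \<Rightarrow> real"
  assumes cd: "c \<le> d" and mu: "\<mu> > 0"
    and d1: "\<And>x. (\<psi> has_real_derivative \<psi>1 x) (at x)"
    and d2: "\<And>x. (\<psi>1 has_real_derivative \<psi>2 x) (at x)"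
    and c2: "continuous_on UNIV \<psi>2"
    and pos: "\<And>x. x \<in> {c..d} \<Longrightarrow> \<psi>2 x \<ge> 0"
    and big: "\<And>x. x \<in> {c..d} \<Longrightarrow> \<mu> \<le> \<bar>\<psi>1 x\<bar>"
  shows "norm (integral {c..d} (\<lambda>x. EE (\<psi> x))) \<le> 4 / \<mu>"
proof -
  have nz: "\<psi>1 x \<noteq> 0" if "x \<in> {c..d}" for x using big[OF that] mu by force
  have cpsi: "continuous_on S \<psi>" for S using deriv_cont_on[OF d1] .
  have cpsi1: "continuous_on S \<psi>1" for S using deriv_cont_on[OF d2] .
  have cpsi2: "continuous_on S \<psi>2" for S by (rule continuous_on_subset[OF c2]) auto
  define u where "u x = \<i> * complex_of_real (inverse (\<psi>1 x))" for x
  define v where "v x = \<i> * complex_of_real (- (\<psi>2 x * inverse (\<psi>1 x ^ 2)))" for x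
  define P where "P x = EE (\<psi> x) * u x" for x
  have der: "(P has_vector_derivative (EE (\<psi> x) + EE (\<psi> x) * v x)) (at x within {c..d})"
    if x: "x \<in> {c..d}" for x
  proof -
    have i1: "((\<lambda>x. inverse (\<psi>1 x)) has_real_derivative (- (\<psi>2 x * inverse (\<psi>1 x ^ 2)))) (at x within {c..d})"
      using has_field_derivative_at_within[OF DERIV_inverse_fun[OF d2 nz[OF x]]] by (simp add: numeral_2_eq_2)
    have u: "(u has_vector_derivative v x) (at x within {c..d})"
      unfolding u_def v_def by (rule has_vector_derivative_mult_right, rule has_vector_derivative_of_real, rule i1)
    have e: "((\<lambda>x. EE (\<psi> x)) has_vector_derivative (- \<i> * complex_of_real (\<psi>1 x) * EE (\<psi> x))) (at x within {c..d})"
      by (rule EE_deriv, rule has_field_derivative_at_within, rule d1)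
    have h: "(P has_vector_derivative (EE (\<psi> x) * v x + (- \<i> * complex_of_real (\<psi>1 x) * EE (\<psi> x)) * u x)) (at x within {c..d})"
      unfolding P_def by (rule has_vector_derivative_mult[OF e u])
    have m: "(- \<i> * complex_of_real (\<psi>1 x) * EE (\<psi> x)) * u x = EE (\<psi> x)"
      using nz[OF x] by (simp add: u_def field_simps)
    have eq: "EE (\<psi> x) * v x + (- \<i> * complex_of_real (\<psi>1 x) * EE (\<psi> x)) * u x = EE (\<psi> x) + EE (\<psi> x) * v x"
      by (subst m) simp
    show ?thesis using h unfolding eq .
  qed
  have ftc: "((\<lambda>x. EE (\<psi> x) + EE (\<psi> x) * v x) has_integral (P d - P c)) {c..d}"
    by (rule fundamental_theorem_of_calculus[OF cd der])
  have cv: "continuous_on {c..d} v"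
    unfolding v_def using nz by (intro continuous_intros cpsi1 cpsi2) auto
  have iE: "(\<lambda>x. EE (\<psi> x)) integrable_on {c..d}"
    by (intro integrable_continuous_interval continuous_intros cpsi)
  have iEv: "(\<lambda>x. EE (\<psi> x) * v x) integrable_on {c..d}"
    by (intro integrable_continuous_interval continuous_intros cpsi cv)
  have eq: "integral {c..d} (\<lambda>x. EE (\<psi> x)) = (P d - P c) - integral {c..d} (\<lambda>x. EE (\<psi> x) * v x)"
    using integral_add[OF iE iEv] integral_unique[OF ftc] by (simp add: algebra_simps)
  have nP: "norm (P x) \<le> 1 / \<mu>" if "x \<in> {c..d}" for x
  proof -
    have "norm (P x) = inverse \<bar>\<psi>1 x\<bar>" by (simp add: P_def u_def norm_mult norm_inverse)
    also have "\<dots> \<le> 1 / \<mu>" using big[OF that] mu by (simp add: field_simps)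
    finally show ?thesis .
  qed
  have g_int: "((\<lambda>x. \<psi>2 x * inverse (\<psi>1 x ^ 2)) has_integral ((- inverse (\<psi>1 d)) - (- inverse (\<psi>1 c)))) {c..d}"
  proof (rule fundamental_theorem_of_calculus[OF cd])
    fix x assume x: "x \<in> {c..d}"
    have "((\<lambda>x. inverse (\<psi>1 x)) has_real_derivative (- (\<psi>2 x * inverse (\<psi>1 x ^ 2)))) (at x within {c..d})"
      using has_field_derivative_at_within[OF DERIV_inverse_fun[OF d2 nz[OF x]]] by (simp add: numeral_2_eq_2)
    then have "((\<lambda>x. - inverse (\<psi>1 x)) has_real_derivative (\<psi>2 x * inverse (\<psi>1 x ^ 2))) (at x within {c..d})"
      using DERIV_minus by fastforce
    then show "((\<lambda>x. - inverse (\<psi>1 x)) has_vector_derivative (\<psi>2 x * inverse (\<psi>1 x ^ 2))) (at x within {c..d})"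
      by (simp add: has_real_derivative_iff_has_vector_derivative)
  qed
  have nv: "norm (integral {c..d} (\<lambda>x. EE (\<psi> x) * v x)) \<le> (- inverse (\<psi>1 d)) - (- inverse (\<psi>1 c))"
  proof -
    have "norm (integral {c..d} (\<lambda>x. EE (\<psi> x) * v x)) \<le> integral {c..d} (\<lambda>x. \<psi>2 x * inverse (\<psi>1 x ^ 2))"
    proof (rule integral_norm_bound_integral[OF iEv])
      show "(\<lambda>x. \<psi>2 x * inverse (\<psi>1 x ^ 2)) integrable_on {c..d}" using g_int by blast
      fix x assume x: "x \<in> {c..d}"
      show "norm (EE (\<psi> x) * v x) \<le> \<psi>2 x * inverse (\<psi>1 x ^ 2)"
        using pos[OF x] by (simp add: v_def norm_mult norm_inverse power2_eq_square abs_mult_self_eq flip: abs_inverse)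
    qed
    then show ?thesis using integral_unique[OF g_int] by simp
  qed
  have "\<bar>inverse (\<psi>1 d)\<bar> \<le> 1/\<mu>" "\<bar>inverse (\<psi>1 c)\<bar> \<le> 1/\<mu>"
    using big[of d] big[of c] cd mu by (auto simp: field_simps abs_inverse)
  then have "(- inverse (\<psi>1 d)) - (- inverse (\<psi>1 c)) \<le> 2 / \<mu>" by linarith
  moreover have "norm (P d - P c) \<le> 2 / \<mu>"
    using nP[of d] nP[of c] cd norm_triangle_ineq4[of "P d" "P c"] by auto
  moreover have "norm ((P d - P c) - integral {c..d} (\<lambda>x. EE (\<psi> x) * v x)) \<le> norm (P d - P c) + norm (integral {c..d} (\<lambda>x. EE (\<psi> x) * v x))"
    by (rule norm_triangle_ineq4)
  ultimately show ?thesis unfolding eq using nv by linarith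
qed


lemma triv_bound:
  assumes "c \<le> d" "continuous_on {c..d} \<psi>"
  shows "norm (integral {c..d} (\<lambda>x. EE (\<psi> x))) \<le> d - c"
  using integral_bound[OF assms(1), of "\<lambda>x. EE (\<psi> x)" 1] assms
  by (auto intro: continuous_intros)

lemma mvt_lower:
  fixes \<psi>1 \<psi>2 :: "real \<Rightarrow> real"
  assumes "c \<le> x" and d2: "\<And>x. (\<psi>1 has_real_derivative \<psi>2 x) (at x)"
    and lam: "\<And>y. c \<le> y \<Longrightarrow> y \<le> x \<Longrightarrow> \<psi>2 y \<ge> L"
  shows "\<psi>1 x - \<psi>1 c \<ge> L * (x - c)"
proof -
  have "(\<lambda>y. \<psi>1 y - L * y) c \<le> (\<lambda>y. \<psi>1 y - L * y) x"
  proof (rule DERIV_nonneg_imp_nondecreasing[OF assms(1)])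
    fix y assume "c \<le> y" "y \<le> x"
    then show "\<exists>z. ((\<lambda>y. \<psi>1 y - L * y) has_real_derivative z) (at y) \<and> z \<ge> 0"
      using lam[of y] by (intro exI[of _ "\<psi>2 y - L"]) (auto intro!: derivative_eq_intros d2)
  qed
  then show ?thesis by (simp add: algebra_simps)
qed

lemma sqrt_facts:
  assumes "(L::real) > 0"
  shows "L * (1 / sqrt L) = sqrt L" "sqrt L > 0" "1 / sqrt L > 0"
  using assms real_div_sqrt[of L] by auto

lemma frac_facts:
  assumes "(L::real) > 0"
  shows "5/sqrt L = 1/sqrt L + 4/sqrt L" "10/sqrt L = 5/sqrt L + 5/sqrt L" "1/sqrt L \<le> 5/sqrt L" "5/sqrt L \<le> 10/sqrt L"
  using assms by (auto simp: field_simps)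

lemma vdc2_right:
  fixes \<psi> \<psi>1 \<psi>2 :: "real \<Rightarrow> real"
  assumes cd: "c \<le> d" and lam: "L > 0"
    and d1: "\<And>x. (\<psi> has_real_derivative \<psi>1 x) (at x)"
    and d2: "\<And>x. (\<psi>1 has_real_derivative \<psi>2 x) (at x)"
    and c2: "continuous_on UNIV \<psi>2"
    and big: "\<And>x. x \<in> {c..d} \<Longrightarrow> \<psi>2 x \<ge> L"
    and start: "\<psi>1 c \<ge> 0"
  shows "norm (integral {c..d} (\<lambda>x. EE (\<psi> x))) \<le> 5 / sqrt L"
proof -
  define \<delta> where "\<delta> = 1 / sqrt L"
  note sf = sqrt_facts[OF lam, folded \<delta>_def]
  have cpsi: "continuous_on S \<psi>" for S using deriv_cont_on[OF d1] .
  show ?thesis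
  proof (cases "d \<le> c + \<delta>")
    case True
    then have "norm (integral {c..d} (\<lambda>x. EE (\<psi> x))) \<le> \<delta>"
      using triv_bound[OF cd cpsi] by linarith
    then show ?thesis using frac_facts[OF lam] unfolding \<delta>_def by linarith
  next
    case False
    have int: "(\<lambda>x. EE (\<psi> x)) integrable_on {c..d}"
      by (intro integrable_continuous_interval continuous_intros cpsi)
    have split: "integral {c..c+\<delta>} (\<lambda>x. EE (\<psi> x)) + integral {c+\<delta>..d} (\<lambda>x. EE (\<psi> x)) = integral {c..d} (\<lambda>x. EE (\<psi> x))"
      by (rule Henstock_Kurzweil_Integration.integral_combine) (use False sf int in auto)
    have n1: "norm (integral {c..c+\<delta>} (\<lambda>x. EE (\<psi> x))) \<le> \<delta>"
      using triv_bound[OF _ cpsi, of c "c+\<delta>"] sf by auto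
    have n2: "norm (integral {c+\<delta>..d} (\<lambda>x. EE (\<psi> x))) \<le> 4 / sqrt L"
    proof (rule vdc1[OF _ _ d1 d2 c2])
      show "c + \<delta> \<le> d" using False by simp
      show "sqrt L > 0" using sf by simp
      fix x assume x: "x \<in> {c+\<delta>..d}"
      show "\<psi>2 x \<ge> 0" using big[of x] x lam sf by auto
      have "\<psi>1 x - \<psi>1 c \<ge> L * (x - c)"
        by (rule mvt_lower[OF _ d2]) (use x sf big in auto)
      moreover have "L * (x - c) \<ge> L * \<delta>" using x lam by (intro mult_left_mono) auto
      ultimately show "sqrt L \<le> \<bar>\<psi>1 x\<bar>" using sf start by linarith
    qed
    have "norm (integral {c..d} (\<lambda>x. EE (\<psi> x))) \<le> \<delta> + 4 / sqrt L"
      unfolding split[symmetric] using n1 n2 norm_triangle_ineq[of "integral {c..c+\<delta>} (\<lambda>x. EE (\<psi> x))" "integral {c+\<delta>..d} (\<lambda>x. EE (\<psi> x))"]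
      by linarith
    then show ?thesis using frac_facts[OF lam] unfolding \<delta>_def by linarith
  qed
qed

lemma vdc2_left:
  fixes \<psi> \<psi>1 \<psi>2 :: "real \<Rightarrow> real"
  assumes cd: "c \<le> d" and lam: "L > 0"
    and d1: "\<And>x. (\<psi> has_real_derivative \<psi>1 x) (at x)"
    and d2: "\<And>x. (\<psi>1 has_real_derivative \<psi>2 x) (at x)"
    and c2: "continuous_on UNIV \<psi>2"
    and big: "\<And>x. x \<in> {c..d} \<Longrightarrow> \<psi>2 x \<ge> L"
    and stop: "\<psi>1 d \<le> 0"
  shows "norm (integral {c..d} (\<lambda>x. EE (\<psi> x))) \<le> 5 / sqrt L"
proof -
  define \<delta> where "\<delta> = 1 / sqrt L"
  note sf = sqrt_facts[OF lam, folded \<delta>_def]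
  have cpsi: "continuous_on S \<psi>" for S using deriv_cont_on[OF d1] .
  show ?thesis
  proof (cases "d - \<delta> \<le> c")
    case True
    then have "norm (integral {c..d} (\<lambda>x. EE (\<psi> x))) \<le> \<delta>"
      using triv_bound[OF cd cpsi] by linarith
    then show ?thesis using frac_facts[OF lam] unfolding \<delta>_def by linarith
  next
    case False
    have int: "(\<lambda>x. EE (\<psi> x)) integrable_on {c..d}"
      by (intro integrable_continuous_interval continuous_intros cpsi)
    have split: "integral {c..d-\<delta>} (\<lambda>x. EE (\<psi> x)) + integral {d-\<delta>..d} (\<lambda>x. EE (\<psi> x)) = integral {c..d} (\<lambda>x. EE (\<psi> x))"
      by (rule Henstock_Kurzweil_Integration.integral_combine) (use False sf int in auto)
    have n1: "norm (integral {d-\<delta>..d} (\<lambda>x. EE (\<psi> x))) \<le> \<delta>"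
      using triv_bound[OF _ cpsi, of "d-\<delta>" d] sf by auto
    have n2: "norm (integral {c..d-\<delta>} (\<lambda>x. EE (\<psi> x))) \<le> 4 / sqrt L"
    proof (rule vdc1[OF _ _ d1 d2 c2])
      show "c \<le> d - \<delta>" using False by simp
      show "sqrt L > 0" using sf by simp
      fix x assume x: "x \<in> {c..d-\<delta>}"
      show "\<psi>2 x \<ge> 0" using big[of x] x lam sf by auto
      have "\<psi>1 d - \<psi>1 x \<ge> L * (d - x)"
        by (rule mvt_lower[OF _ d2]) (use x sf big in auto)
      moreover have "L * (d - x) \<ge> L * \<delta>" using x lam by (intro mult_left_mono) auto
      ultimately show "sqrt L \<le> \<bar>\<psi>1 x\<bar>" using sf stop by linarith
    qed
    have "norm (integral {c..d} (\<lambda>x. EE (\<psi> x))) \<le> 4 / sqrt L + \<delta>"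
      unfolding split[symmetric] using n1 n2 norm_triangle_ineq[of "integral {c..d-\<delta>} (\<lambda>x. EE (\<psi> x))" "integral {d-\<delta>..d} (\<lambda>x. EE (\<psi> x))"]
      by linarith
    then show ?thesis using frac_facts[OF lam] unfolding \<delta>_def by linarith
  qed
qed

lemma vdc2:
  fixes \<psi> \<psi>1 \<psi>2 :: "real \<Rightarrow> real"
  assumes ab: "a \<le> b" and lam: "L > 0"
    and d1: "\<And>x. (\<psi> has_real_derivative \<psi>1 x) (at x)"
    and d2: "\<And>x. (\<psi>1 has_real_derivative \<psi>2 x) (at x)"
    and c2: "continuous_on UNIV \<psi>2"
    and big: "\<And>x. x \<in> {a..b} \<Longrightarrow> \<psi>2 x \<ge> L"
  shows "norm (integral {a..b} (\<lambda>x. EE (\<psi> x))) \<le> 10 / sqrt L"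
proof -
  have cpsi: "continuous_on S \<psi>" for S using deriv_cont_on[OF d1] .
  have cpsi1: "continuous_on S \<psi>1" for S using deriv_cont_on[OF d2] .
  have sp: "0 < sqrt L" using lam by simp
  show ?thesis
  proof (cases "\<psi>1 a \<ge> 0")
    case True
    from vdc2_right[OF ab lam d1 d2 c2 big True] frac_facts[OF lam] show ?thesis by linarith
  next
    case a: False
    show ?thesis
    proof (cases "\<psi>1 b \<le> 0")
      case True
      from vdc2_left[OF ab lam d1 d2 c2 big True] frac_facts[OF lam] show ?thesis by linarith
    next
      case False
      obtain m where m: "a \<le> m" "m \<le> b" "\<psi>1 m = 0"
        using IVT'[of \<psi>1 a 0 b, OF _ _ ab cpsi1] a False by auto
      have int: "(\<lambda>x. EE (\<psi> x)) integrable_on {a..b}"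
        by (intro integrable_continuous_interval continuous_intros cpsi)
      have split: "integral {a..m} (\<lambda>x. EE (\<psi> x)) + integral {m..b} (\<lambda>x. EE (\<psi> x)) = integral {a..b} (\<lambda>x. EE (\<psi> x))"
        by (rule Henstock_Kurzweil_Integration.integral_combine) (use m int in auto)
      have n1: "norm (integral {a..m} (\<lambda>x. EE (\<psi> x))) \<le> 5 / sqrt L"
        by (rule vdc2_left[OF m(1) lam d1 d2 c2]) (use big m in auto)
      have n2: "norm (integral {m..b} (\<lambda>x. EE (\<psi> x))) \<le> 5 / sqrt L"
        by (rule vdc2_right[OF m(2) lam d1 d2 c2]) (use big m in auto)
      show ?thesis
        unfolding split[symmetric] using n1 n2 norm_triangle_ineq[of "integral {a..m} (\<lambda>x. EE (\<psi> x))" "integral {m..b} (\<lambda>x. EE (\<psi> x))"] frac_facts[OF lam]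
        by linarith
    qed
  qed
qed


lemma amp:
  fixes F :: "real \<Rightarrow> complex" and h h' g :: "real \<Rightarrow> real"
  assumes ab: "a \<le> b" and cF: "continuous_on {a..b} F"
    and M: "\<And>u. u \<in> {a..b} \<Longrightarrow> norm (integral {a..u} F) \<le> M"
    and dh: "\<And>x. (h has_real_derivative h' x) (at x)"
    and ch': "continuous_on {a..b} h'"
    and hg: "\<And>x. x \<in> {a..b} \<Longrightarrow> \<bar>h' x\<bar> \<le> g x"
    and ig: "g integrable_on {a..b}"
  shows "norm (integral {a..b} (\<lambda>x. F x * complex_of_real (h x))) \<le> M * \<bar>h b\<bar> + M * integral {a..b} g"
proof -
  define G where "G u = integral {a..u} F" for u
  have dG: "(G has_vector_derivative F x) (at x within {a..b})" if "x \<in> {a..b}" for x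
    unfolding G_def by (rule integral_has_vector_derivative[OF cF that])
  have cG: "continuous_on {a..b} G" by (rule continuous_on_vector_derivative[OF dG])
  have ch: "continuous_on S h" for S using deriv_cont_on[OF dh] .
  define P where "P x = G x * complex_of_real (h x)" for x
  have dP: "(P has_vector_derivative (G x * complex_of_real (h' x) + F x * complex_of_real (h x))) (at x within {a..b})"
    if x: "x \<in> {a..b}" for x
  proof -
    have "((\<lambda>x. complex_of_real (h x)) has_vector_derivative complex_of_real (h' x)) (at x within {a..b})"
      by (rule has_vector_derivative_of_real, rule has_field_derivative_at_within, rule dh)
    from has_vector_derivative_mult[OF dG[OF x] this] show ?thesis unfolding P_def .
  qed
  have ftc: "((\<lambda>x. G x * complex_of_real (h' x) + F x * complex_of_real (h x)) has_integral (P b - P a)) {a..b}"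
    by (rule fundamental_theorem_of_calculus[OF ab dP])
  have Pa: "P a = 0" by (simp add: P_def G_def)
  have i1: "(\<lambda>x. G x * complex_of_real (h' x)) integrable_on {a..b}"
    by (intro integrable_continuous_interval continuous_intros cG ch')
  have i2: "(\<lambda>x. F x * complex_of_real (h x)) integrable_on {a..b}"
    by (intro integrable_continuous_interval continuous_intros cF ch)
  have eq: "integral {a..b} (\<lambda>x. F x * complex_of_real (h x)) = P b - integral {a..b} (\<lambda>x. G x * complex_of_real (h' x))"
    using integral_add[OF i1 i2] integral_unique[OF ftc] Pa by (simp add: algebra_simps)
  have M0: "M \<ge> 0" using M[of a] ab by (auto intro: order_trans[OF norm_ge_zero])
  have nPb: "norm (P b) \<le> M * \<bar>h b\<bar>"
    using M[of b] ab unfolding P_def G_def by (auto simp: norm_mult intro: mult_right_mono)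
  have "norm (integral {a..b} (\<lambda>x. G x * complex_of_real (h' x))) \<le> integral {a..b} (\<lambda>x. M * g x)"
  proof (rule Henstock_Kurzweil_Integration.integral_norm_bound_integral[OF i1])
    show "(\<lambda>x. M * g x) integrable_on {a..b}" using ig by (rule integrable_on_mult_right)
    fix x assume x: "x \<in> {a..b}"
    have "norm (G x) \<le> M" using M[OF x] unfolding G_def .
    then show "norm (G x * complex_of_real (h' x)) \<le> M * g x"
      using hg[OF x] M0 by (auto simp: norm_mult intro: mult_mono)
  qed
  then have nI: "norm (integral {a..b} (\<lambda>x. G x * complex_of_real (h' x))) \<le> M * integral {a..b} g"
    by simp
  show ?thesis unfolding eq
    using nPb nI norm_triangle_ineq4[of "P b" "integral {a..b} (\<lambda>x. G x * complex_of_real (h' x))"]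
    by linarith
qed


lemma exp_i_real: "exp (\<i> * complex_of_real x) = complex_of_real (cos x) + \<i> * complex_of_real (sin x)"
  by (simp add: complex_eq_iff Re_exp Im_exp)

lemma exp_mi_real: "exp (- \<i> * complex_of_real x) = complex_of_real (cos x) - \<i> * complex_of_real (sin x)"
  using exp_i_real[of "-x"] by simp

definition sr :: "real \<Rightarrow> real \<Rightarrow> real" where "sr r \<eta> = (if r = 0 then \<eta> else sin (\<eta> * r) / r)"
definition DD :: "real \<Rightarrow> real" where "DD \<eta> = 1 + 2 * \<eta>^2"

lemma DD_pos: "DD \<eta> > 0" unfolding DD_def by (simp add: add_pos_nonneg)

lemma calR0_eq: "calR0 \<eta> r = \<i> * complex_of_real (sr r \<eta> / (2 * pi * DD \<eta>))"
proof (cases "r = 0")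
  case True
  then show ?thesis unfolding calR0_def sr_def DD_def by (simp add: field_simps)
next
  case False
  have e: "exp (\<i> * complex_of_real (\<eta> * r)) - exp (- \<i> * complex_of_real (\<eta> * r)) = 2 * \<i> * complex_of_real (sin (\<eta> * r))"
    unfolding exp_i_real exp_mi_real by simp
  show ?thesis unfolding calR0_def sr_def DD_def e using False by (simp add: field_simps)
qed

lemma osc_eq: "osc_integrand t r \<eta> = \<i> / complex_of_real pi * (EE (t * (\<eta>^4 + \<eta>^2)) * complex_of_real (\<eta> * sr r \<eta>))"
proof -
  have "(4 * \<eta> ^ 3 + 2 * \<eta>) = 2 * \<eta> * DD \<eta>" unfolding DD_def by (simp add: algebra_simps power3_eq_cube power2_eq_square)
  then show ?thesis unfolding osc_integrand_def calR0_eq EE_def using DD_pos[of \<eta>]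
    by (simp add: field_simps)
qed


lemma sr_deriv: "(sr r has_real_derivative cos (\<eta> * r)) (at \<eta>)"
proof (cases "r = 0")
  case True
  then show ?thesis unfolding sr_def[abs_def] by (auto intro!: derivative_eq_intros)
next
  case False
  then have e: "sr r = (\<lambda>\<eta>. sin (\<eta> * r) / r)" unfolding sr_def[abs_def] by simp
  show ?thesis unfolding e using False by (auto intro!: derivative_eq_intros)
qed

lemma sr_cont: "continuous_on S (sr r)"
  using deriv_cont_on[OF sr_deriv] .

lemma sr_cont'[continuous_intros]: "continuous_on S f \<Longrightarrow> continuous_on S (\<lambda>x. sr r (f x))"
  using continuous_on_compose2[OF sr_cont, of S f UNIV r] by auto

lemma sr_bound: "\<bar>sr r \<eta>\<bar> \<le> \<bar>\<eta>\<bar>"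
proof (cases "r = 0")
  case True then show ?thesis by (simp add: sr_def)
next
  case False
  have "\<bar>sin (\<eta> * r)\<bar> \<le> \<bar>\<eta> * r\<bar>" by (rule abs_sin_x_le_abs_x)
  then show ?thesis using False by (simp add: sr_def abs_mult divide_simps)
qed

lemma sr_0[simp]: "sr r 0 = 0" by (simp add: sr_def)

definition ww :: "real \<Rightarrow> real \<Rightarrow> real" where "ww r \<eta> = sr r \<eta> / DD \<eta>"
definition ww' :: "real \<Rightarrow> real \<Rightarrow> real" where
  "ww' r \<eta> = cos (\<eta> * r) / DD \<eta> - 4 * \<eta> * sr r \<eta> / (DD \<eta>)^2"

lemma DD_deriv: "(DD has_real_derivative (4 * \<eta>)) (at \<eta>)"
  unfolding DD_def[abs_def] by (auto intro!: derivative_eq_intros)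

lemma ww_deriv: "(ww r has_real_derivative ww' r \<eta>) (at \<eta>)"
proof -
  have "((\<lambda>\<eta>. sr r \<eta> / DD \<eta>) has_real_derivative
     (cos (\<eta> * r) * DD \<eta> - sr r \<eta> * (4 * \<eta>)) / (DD \<eta> * DD \<eta>)) (at \<eta>)"
    using DERIV_divide[OF sr_deriv DD_deriv] DD_pos[of \<eta>] by simp
  moreover have "(cos (\<eta> * r) * DD \<eta> - sr r \<eta> * (4 * \<eta>)) / (DD \<eta> * DD \<eta>) = ww' r \<eta>"
    unfolding ww'_def using DD_pos[of \<eta>] by (simp add: field_simps power2_eq_square)
  ultimately show ?thesis unfolding ww_def[abs_def] by simp
qed

lemma DD_cont[continuous_intros]: "continuous_on S f \<Longrightarrow> continuous_on S (\<lambda>x. DD (f x))"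
  unfolding DD_def by (intro continuous_intros)

lemma ww'_cont: "continuous_on S (ww' r)"
proof -
  have "DD x \<noteq> 0" for x using DD_pos[of x] by linarith
  then show ?thesis unfolding ww'_def[abs_def] by (intro continuous_intros) auto
qed

lemma ww_bound: "\<eta> \<ge> 0 \<Longrightarrow> \<bar>ww r \<eta>\<bar> \<le> \<eta> / DD \<eta>"
  unfolding ww_def using sr_bound[of r \<eta>] DD_pos[of \<eta>] by (simp add: divide_right_mono abs_div)

lemma frac_le_half: "\<eta> \<ge> 0 \<Longrightarrow> 4 * \<eta>^2 \<le> 2 * DD \<eta>" unfolding DD_def by simp

lemma ww'_bound: "\<bar>ww' r \<eta>\<bar> \<le> 3 / DD \<eta>"
proof -
  have D: "DD \<eta> > 0" by (rule DD_pos)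
  have a: "\<bar>cos (\<eta> * r) / DD \<eta>\<bar> \<le> 1 / DD \<eta>"
    using D by (simp add: abs_div divide_right_mono)
  have "\<bar>4 * \<eta> * sr r \<eta>\<bar> \<le> 4 * \<eta>^2"
    using sr_bound[of r \<eta>] by (simp add: abs_mult power2_eq_square) (metis abs_ge_zero abs_mult_self_eq mult_left_mono)
  also have "\<dots> \<le> 2 * DD \<eta>" unfolding DD_def by simp
  finally have "\<bar>4 * \<eta> * sr r \<eta> / (DD \<eta>)^2\<bar> \<le> 2 * DD \<eta> / (DD \<eta>)^2"
    using D by (simp add: abs_div divide_right_mono)
  also have "\<dots> = 2 / DD \<eta>" using D by (simp add: power2_eq_square)
  finally have b: "\<bar>4 * \<eta> * sr r \<eta> / (DD \<eta>)^2\<bar> \<le> 2 / DD \<eta>" .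
  have c: "1 / DD \<eta> + 2 / DD \<eta> = 3 / DD \<eta>" using D by (simp add: field_simps)
  have "\<bar>cos (\<eta> * r) / DD \<eta> - 4 * \<eta> * sr r \<eta> / (DD \<eta>)^2\<bar> \<le> \<bar>cos (\<eta> * r) / DD \<eta>\<bar> + \<bar>4 * \<eta> * sr r \<eta> / (DD \<eta>)^2\<bar>"
    by (rule abs_triangle_ineq4)
  then show ?thesis unfolding ww'_def using a b c by linarith
qed


definition PP :: "real \<Rightarrow> real \<Rightarrow> real \<Rightarrow> complex" where
  "PP t r \<eta> = EE (t * (\<eta>^4 + \<eta>^2)) * complex_of_real (ww r \<eta>)"
definition QQ :: "real \<Rightarrow> real \<Rightarrow> real \<Rightarrow> complex" where
  "QQ t r \<eta> = EE (t * (\<eta>^4 + \<eta>^2)) * complex_of_real (ww' r \<eta>)"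

lemma phase_deriv: "((\<lambda>\<eta>. t * (\<eta>^4 + \<eta>^2)) has_real_derivative (t * (4 * \<eta>^3 + 2 * \<eta>))) (at \<eta> within S)"
  by (auto intro!: derivative_eq_intros simp: algebra_simps)

lemma QQ_cont: "continuous_on S (QQ t r)"
  unfolding QQ_def[abs_def] by (intro continuous_intros ww'_cont)

lemma PP_deriv: "(PP t r has_vector_derivative
    (QQ t r \<eta> + (- \<i> * complex_of_real (t * (4 * \<eta>^3 + 2 * \<eta>)) * EE (t * (\<eta>^4 + \<eta>^2))) * complex_of_real (ww r \<eta>))) (at \<eta> within S)"
proof -
  have e: "((\<lambda>\<eta>. EE (t * (\<eta>^4 + \<eta>^2))) has_vector_derivative (- \<i> * complex_of_real (t * (4 * \<eta>^3 + 2 * \<eta>)) * EE (t * (\<eta>^4 + \<eta>^2)))) (at \<eta> within S)"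
    by (rule EE_deriv, rule phase_deriv)
  have w: "((\<lambda>\<eta>. complex_of_real (ww r \<eta>)) has_vector_derivative complex_of_real (ww' r \<eta>)) (at \<eta> within S)"
    by (rule has_vector_derivative_of_real, rule has_field_derivative_at_within, rule ww_deriv)
  show ?thesis using has_vector_derivative_mult[OF e w] unfolding PP_def[abs_def] QQ_def by simp
qed

lemma osc_pointwise:
  assumes "t \<noteq> 0"
  shows "osc_integrand t r \<eta> = complex_of_real (- 1 / (2 * pi * t)) *
     ((QQ t r \<eta> + (- \<i> * complex_of_real (t * (4 * \<eta>^3 + 2 * \<eta>)) * EE (t * (\<eta>^4 + \<eta>^2))) * complex_of_real (ww r \<eta>)) - QQ t r \<eta>)"
proof -
  have "(4 * \<eta> ^ 3 + 2 * \<eta>) * ww r \<eta> = 2 * \<eta> * sr r \<eta>"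
    unfolding ww_def DD_def using DD_pos[of \<eta>]
    by (simp add: field_simps DD_def power3_eq_cube power2_eq_square)
  then have F: "complex_of_real (t * (4 * \<eta>^3 + 2 * \<eta>)) * complex_of_real (ww r \<eta>) = complex_of_real (2 * t * (\<eta> * sr r \<eta>))"
    by (metis (no_types, lifting) mult.assoc mult.left_commute of_real_mult)
  have A: "(- \<i> * complex_of_real (t * (4 * \<eta>^3 + 2 * \<eta>)) * EE (t * (\<eta>^4 + \<eta>^2))) * complex_of_real (ww r \<eta>)
      = - \<i> * EE (t * (\<eta>^4 + \<eta>^2)) * complex_of_real (2 * t * (\<eta> * sr r \<eta>))"
  proof -
    have "(- \<i> * complex_of_real (t * (4 * \<eta>^3 + 2 * \<eta>)) * EE (t * (\<eta>^4 + \<eta>^2))) * complex_of_real (ww r \<eta>)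
      = - \<i> * EE (t * (\<eta>^4 + \<eta>^2)) * (complex_of_real (t * (4 * \<eta>^3 + 2 * \<eta>)) * complex_of_real (ww r \<eta>))"
      by (simp only: ac_simps)
    then show ?thesis unfolding F .
  qed
  have B: "(QQ t r \<eta> + (- \<i> * complex_of_real (t * (4 * \<eta>^3 + 2 * \<eta>)) * EE (t * (\<eta>^4 + \<eta>^2))) * complex_of_real (ww r \<eta>)) - QQ t r \<eta>
     = - \<i> * EE (t * (\<eta>^4 + \<eta>^2)) * complex_of_real (2 * t * (\<eta> * sr r \<eta>))"
    unfolding A by simp
  show ?thesis unfolding osc_eq B using assms
    by (simp add: field_simps)
qed


lemma osc_ibp:
  assumes t: "t \<noteq> 0" and ab: "a \<le> b"
  shows "integral {a..b} (osc_integrand t r) = complex_of_real (- 1 / (2 * pi * t)) *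
     ((PP t r b - PP t r a) - integral {a..b} (QQ t r))"
proof -
  define Pd where "Pd \<eta> = QQ t r \<eta> + (- \<i> * complex_of_real (t * (4 * \<eta>^3 + 2 * \<eta>)) * EE (t * (\<eta>^4 + \<eta>^2))) * complex_of_real (ww r \<eta>)" for \<eta>
  have ftc: "(Pd has_integral (PP t r b - PP t r a)) {a..b}"
    unfolding Pd_def by (rule fundamental_theorem_of_calculus[OF ab PP_deriv])
  have iQ: "QQ t r integrable_on {a..b}"
    by (rule integrable_continuous_interval, rule QQ_cont)
  have iP: "Pd integrable_on {a..b}" using ftc by blast
  have "integral {a..b} (osc_integrand t r) = integral {a..b} (\<lambda>\<eta>. complex_of_real (- 1 / (2 * pi * t)) * (Pd \<eta> - QQ t r \<eta>))"
    by (rule integral_cong) (simp add: osc_pointwise[OF t] Pd_def)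
  also have "\<dots> = complex_of_real (- 1 / (2 * pi * t)) * (integral {a..b} Pd - integral {a..b} (QQ t r))"
    using integral_diff[OF iP iQ] by simp
  also have "\<dots> = complex_of_real (- 1 / (2 * pi * t)) * ((PP t r b - PP t r a) - integral {a..b} (QQ t r))"
    using integral_unique[OF ftc] by simp
  finally show ?thesis .
qed


lemma vdc_amp:
  fixes \<psi> \<psi>1 \<psi>2 h h' g :: "real \<Rightarrow> real"
  assumes ab: "a \<le> b" and lam: "L > 0"
    and d1: "\<And>x. (\<psi> has_real_derivative \<psi>1 x) (at x)"
    and d2: "\<And>x. (\<psi>1 has_real_derivative \<psi>2 x) (at x)"
    and c2: "continuous_on UNIV \<psi>2"
    and big: "\<And>x. x \<in> {a..b} \<Longrightarrow> \<psi>2 x \<ge> L"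
    and dh: "\<And>x. (h has_real_derivative h' x) (at x)"
    and ch': "continuous_on {a..b} h'"
    and hg: "\<And>x. x \<in> {a..b} \<Longrightarrow> \<bar>h' x\<bar> \<le> g x"
    and ig: "g integrable_on {a..b}"
  shows "norm (integral {a..b} (\<lambda>x. EE (\<psi> x) * complex_of_real (h x))) \<le> 10 / sqrt L * \<bar>h b\<bar> + 10 / sqrt L * integral {a..b} g"
proof (rule amp[OF ab _ _ dh ch' hg ig])
  show "continuous_on {a..b} (\<lambda>x. EE (\<psi> x))"
    by (intro continuous_intros deriv_cont_on[OF d1])
  fix u assume u: "u \<in> {a..b}"
  show "norm (integral {a..u} (\<lambda>x. EE (\<psi> x))) \<le> 10 / sqrt L"
    by (rule vdc2[OF _ lam d1 d2 c2]) (use u big in auto)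
qed

definition phs :: "real \<Rightarrow> real \<Rightarrow> real \<Rightarrow> real" where
  "phs t s \<eta> = t * (\<eta>^4 + \<eta>^2) + s * \<eta>"

lemma phs_d1: "(phs t s has_real_derivative (t * (4 * \<eta>^3 + 2 * \<eta>) + s)) (at \<eta>)"
  unfolding phs_def[abs_def] by (auto intro!: derivative_eq_intros simp: algebra_simps)

lemma phs_d2: "((\<lambda>\<eta>. t * (4 * \<eta>^3 + 2 * \<eta>) + s) has_real_derivative (t * (12 * \<eta>^2 + 2))) (at \<eta>)"
  by (auto intro!: derivative_eq_intros simp: algebra_simps)

lemma phs_c2: "continuous_on UNIV (\<lambda>\<eta>::real. t * (12 * \<eta>^2 + 2))"
  by (intro continuous_intros)

lemma phs_big:
  assumes "t > 0" "0 \<le> a" "a \<le> \<eta>"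
  shows "t * (12 * \<eta>^2 + 2) \<ge> 2 * t * DD a"
proof -
  have "a^2 \<le> \<eta>^2" using assms by (intro power_mono) auto
  then have "2 * DD a \<le> 12 * \<eta>^2 + 2" unfolding DD_def using zero_le_power2[of \<eta>] by (smt (verit))
  then show ?thesis using assms(1) by (simp add: mult_left_mono)
qed

lemma term_bound:
  fixes h h' g :: "real \<Rightarrow> real"
  assumes t: "t > 0" and a0: "0 \<le> a" and ab: "a \<le> b"
    and dh: "\<And>x. (h has_real_derivative h' x) (at x)"
    and ch': "continuous_on {a..b} h'"
    and hg: "\<And>x. x \<in> {a..b} \<Longrightarrow> \<bar>h' x\<bar> \<le> g x"
    and ig: "g integrable_on {a..b}"
  shows "norm (integral {a..b} (\<lambda>x. EE (phs t s x) * complex_of_real (h x)))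
     \<le> 10 / sqrt (2 * t * DD a) * \<bar>h b\<bar> + 10 / sqrt (2 * t * DD a) * integral {a..b} g"
proof (rule vdc_amp[OF ab _ phs_d1 phs_d2 phs_c2 _ dh ch' hg ig])
  show "2 * t * DD a > 0" using t DD_pos[of a] by simp
  fix x assume "x \<in> {a..b}"
  then show "t * (12 * x^2 + 2) \<ge> 2 * t * DD a" using phs_big[OF t a0] by auto
qed

definition h1 :: "real \<Rightarrow> real" where "h1 \<eta> = 1 / DD \<eta>"
definition g1 :: "real \<Rightarrow> real" where "g1 \<eta> = 4 * \<eta> / (DD \<eta>)^2"
definition h2 :: "real \<Rightarrow> real \<Rightarrow> real" where "h2 r \<eta> = 4 * \<eta> * sr r \<eta> / (DD \<eta>)^2"
definition h2' :: "real \<Rightarrow> real \<Rightarrow> real" where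
  "h2' r \<eta> = (4 * sr r \<eta> + 4 * \<eta> * cos (\<eta> * r)) / (DD \<eta>)^2 - 32 * \<eta>^2 * sr r \<eta> / (DD \<eta>)^3"

lemma DD_ne: "DD x \<noteq> 0" using DD_pos[of x] by linarith

lemma h1_deriv: "(h1 has_real_derivative (- g1 \<eta>)) (at \<eta>)"
proof -
  have "((\<lambda>\<eta>. inverse (DD \<eta>)) has_real_derivative - (4 * \<eta> * inverse (DD \<eta> ^ 2))) (at \<eta>)"
    using DERIV_inverse_fun[OF DD_deriv DD_ne] by (simp add: numeral_2_eq_2)
  then show ?thesis unfolding h1_def[abs_def] g1_def by (simp add: divide_inverse)
qed

lemma g1_cont: "continuous_on S g1"
  unfolding g1_def[abs_def] using DD_ne by (intro continuous_intros) auto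

lemma g1_int: "a \<le> b \<Longrightarrow> (g1 has_integral (h1 a - h1 b)) {a..b}"
proof -
  assume ab: "a \<le> b"
  have "(g1 has_integral ((\<lambda>x. - h1 x) b - (\<lambda>x. - h1 x) a)) {a..b}"
  proof (rule fundamental_theorem_of_calculus[OF ab])
    fix x assume "x \<in> {a..b}"
    have "((\<lambda>x. - h1 x) has_real_derivative g1 x) (at x within {a..b})"
      using DERIV_minus[OF h1_deriv[of x]] by (simp add: has_field_derivative_at_within)
    then show "((\<lambda>x. - h1 x) has_vector_derivative g1 x) (at x within {a..b})"
      by (simp add: has_real_derivative_iff_has_vector_derivative)
  qed
  then show ?thesis by simp
qed

lemma h2_deriv: "(h2 r has_real_derivative h2' r \<eta>) (at \<eta>)"
proof -
  have N: "((\<lambda>\<eta>. 4 * \<eta> * sr r \<eta>) has_real_derivative (4 * sr r \<eta> + 4 * \<eta> * cos (\<eta> * r))) (at \<eta>)"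
    by (auto intro!: derivative_eq_intros sr_deriv simp: algebra_simps)
  have D2: "((\<lambda>\<eta>. (DD \<eta>)^2) has_real_derivative (2 * DD \<eta> * (4 * \<eta>))) (at \<eta>)"
    using DERIV_power[OF DD_deriv, of 2] by (simp add: ac_simps)
  have "((\<lambda>\<eta>. 4 * \<eta> * sr r \<eta> / (DD \<eta>)^2) has_real_derivative
     ((4 * sr r \<eta> + 4 * \<eta> * cos (\<eta> * r)) * (DD \<eta>)^2 - 4 * \<eta> * sr r \<eta> * (2 * DD \<eta> * (4 * \<eta>))) / ((DD \<eta>)^2 * (DD \<eta>)^2)) (at \<eta>)"
    using DERIV_divide[OF N D2] DD_ne[of \<eta>] by simp
  moreover have "((4 * sr r \<eta> + 4 * \<eta> * cos (\<eta> * r)) * (DD \<eta>)^2 - 4 * \<eta> * sr r \<eta> * (2 * DD \<eta> * (4 * \<eta>))) / ((DD \<eta>)^2 * (DD \<eta>)^2) = h2' r \<eta>"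
    unfolding h2'_def using DD_ne[of \<eta>] by (simp add: field_simps power2_eq_square power3_eq_cube)
  ultimately show ?thesis unfolding h2_def[abs_def] by simp
qed

lemma h2'_cont: "continuous_on S (h2' r)"
  unfolding h2'_def[abs_def] using DD_ne by (intro continuous_intros) auto


lemma h2'_bound:
  assumes e: "\<eta> \<ge> 0"
  shows "\<bar>h2' r \<eta>\<bar> \<le> 6 * g1 \<eta>"
proof -
  have D: "DD \<eta> > 0" by (rule DD_pos)
  have s: "\<bar>sr r \<eta>\<bar> \<le> \<eta>" using sr_bound[of r \<eta>] e by simp
  have c: "\<bar>cos (\<eta> * r)\<bar> \<le> 1" by simp
  have "\<bar>4 * \<eta> * cos (\<eta> * r)\<bar> \<le> 4 * \<eta>"
    using c e by (simp add: abs_mult mult_left_le)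
  then have n1: "\<bar>4 * sr r \<eta> + 4 * \<eta> * cos (\<eta> * r)\<bar> \<le> 8 * \<eta>" using s by linarith
  have A: "\<bar>(4 * sr r \<eta> + 4 * \<eta> * cos (\<eta> * r)) / (DD \<eta>)^2\<bar> \<le> 8 * \<eta> / (DD \<eta>)^2"
    using n1 D by (simp add: abs_div divide_right_mono)
  have "\<bar>32 * \<eta>^2 * sr r \<eta>\<bar> \<le> 32 * \<eta>^2 * \<eta>"
    using s e by (simp add: abs_mult mult_left_mono)
  also have "\<dots> = 16 * \<eta> * (2 * \<eta>^2)" by (simp add: algebra_simps)
  also have "\<dots> \<le> 16 * \<eta> * DD \<eta>" using e unfolding DD_def by (intro mult_left_mono) auto
  finally have n2: "\<bar>32 * \<eta>^2 * sr r \<eta>\<bar> \<le> 16 * \<eta> * DD \<eta>" .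
  have B: "\<bar>32 * \<eta>^2 * sr r \<eta> / (DD \<eta>)^3\<bar> \<le> 16 * \<eta> / (DD \<eta>)^2"
  proof -
    have "\<bar>32 * \<eta>^2 * sr r \<eta> / (DD \<eta>)^3\<bar> \<le> 16 * \<eta> * DD \<eta> / (DD \<eta>)^3"
      using n2 D by (simp add: abs_div divide_right_mono)
    also have "\<dots> = 16 * \<eta> / (DD \<eta>)^2" using D by (simp add: power3_eq_cube power2_eq_square)
    finally show ?thesis .
  qed
  have C: "8 * \<eta> / (DD \<eta>)^2 + 16 * \<eta> / (DD \<eta>)^2 = 6 * g1 \<eta>"
    unfolding g1_def using D by (simp add: field_simps)
  have "\<bar>h2' r \<eta>\<bar> \<le> \<bar>(4 * sr r \<eta> + 4 * \<eta> * cos (\<eta> * r)) / (DD \<eta>)^2\<bar> + \<bar>32 * \<eta>^2 * sr r \<eta> / (DD \<eta>)^3\<bar>"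
    unfolding h2'_def by (rule abs_triangle_ineq4)
  then show ?thesis using A B C by linarith
qed

lemma h1_pos: "h1 x > 0" unfolding h1_def using DD_pos[of x] by simp

lemma h1_mono: "0 \<le> a \<Longrightarrow> a \<le> b \<Longrightarrow> h1 b \<le> h1 a"
  unfolding h1_def DD_def by (auto intro!: divide_left_mono power_mono add_pos_nonneg mult_pos_pos)

lemma h2_bound: "\<bar>h2 r b\<bar> \<le> 2 * h1 b"
proof -
  have D: "DD b > 0" by (rule DD_pos)
  have "\<bar>4 * b * sr r b\<bar> \<le> 4 * b^2"
    using sr_bound[of r b] by (simp add: abs_mult power2_eq_square) (metis abs_ge_zero abs_mult_self_eq mult_left_mono)
  also have "\<dots> \<le> 2 * DD b" unfolding DD_def by simp
  finally have "\<bar>h2 r b\<bar> \<le> 2 * DD b / (DD b)^2"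
    unfolding h2_def using D by (simp add: abs_div divide_right_mono)
  also have "\<dots> = 2 * h1 b" unfolding h1_def using D by (simp add: power2_eq_square)
  finally show ?thesis .
qed

lemma QQ_decomp: "QQ t r \<eta> = complex_of_real (1/2) * (EE (phs t (-r) \<eta>) * complex_of_real (h1 \<eta>))
   + complex_of_real (1/2) * (EE (phs t r \<eta>) * complex_of_real (h1 \<eta>))
   - EE (phs t 0 \<eta>) * complex_of_real (h2 r \<eta>)"
proof -
  have e1: "EE (phs t (-r) \<eta>) = EE (t * (\<eta>^4 + \<eta>^2)) * exp (\<i> * complex_of_real (\<eta> * r))"
    unfolding EE_def phs_def by (simp add: mult_exp_exp algebra_simps)
  have e2: "EE (phs t r \<eta>) = EE (t * (\<eta>^4 + \<eta>^2)) * exp (- \<i> * complex_of_real (\<eta> * r))"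
    unfolding EE_def phs_def by (simp add: mult_exp_exp algebra_simps)
  have e3: "EE (phs t 0 \<eta>) = EE (t * (\<eta>^4 + \<eta>^2))" unfolding phs_def by simp
  have c: "exp (\<i> * complex_of_real (\<eta> * r)) + exp (- \<i> * complex_of_real (\<eta> * r)) = 2 * complex_of_real (cos (\<eta> * r))"
    unfolding exp_i_real exp_mi_real by simp
  have w: "ww' r \<eta> = cos (\<eta> * r) * h1 \<eta> - h2 r \<eta>"
    unfolding ww'_def h1_def h2_def by simp
  define E where "E = EE (t * (\<eta>^4 + \<eta>^2))"
  define X where "X = exp (\<i> * complex_of_real (\<eta> * r))"
  define Y where "Y = exp (- \<i> * complex_of_real (\<eta> * r))"
  have s1: "complex_of_real (1/2) * (E * X * complex_of_real (h1 \<eta>)) + complex_of_real (1/2) * (E * Y * complex_of_real (h1 \<eta>))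
     = E * complex_of_real (h1 \<eta>) * ((X + Y) / 2)"
    by (simp add: algebra_simps)
  have s2: "(X + Y) / 2 = complex_of_real (cos (\<eta> * r))" using c unfolding X_def Y_def by simp
  have s3: "E * complex_of_real (cos (\<eta> * r) * h1 \<eta> - h2 r \<eta>) = E * complex_of_real (h1 \<eta>) * complex_of_real (cos (\<eta> * r)) - E * complex_of_real (h2 r \<eta>)"
    by (simp add: algebra_simps)
  show ?thesis unfolding QQ_def e1 e2 e3 w
    unfolding E_def[symmetric] X_def[symmetric] Y_def[symmetric] s3 s1 s2 ..
qed


lemma g1_nonneg: "x \<ge> 0 \<Longrightarrow> g1 x \<ge> 0" unfolding g1_def by simp

lemma QQ_bound:
  assumes t: "t > 0" and a0: "0 \<le> a" and ab: "a \<le> b"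
  shows "norm (integral {a..b} (QQ t r)) \<le> 70 / sqrt (2 * t * DD a) * h1 a"
proof -
  define M where "M = 10 / sqrt (2 * t * DD a)"
  have M0: "M \<ge> 0" unfolding M_def using t DD_pos[of a] by simp
  have ch1: "continuous_on S h1" for S using deriv_cont_on[OF h1_deriv] .
  have ch2: "continuous_on S (h2 r)" for S using deriv_cont_on[OF h2_deriv] .
  have cmg1: "continuous_on S (\<lambda>x. - g1 x)" for S using g1_cont by (intro continuous_intros)
  have ig1: "integral {a..b} g1 = h1 a - h1 b" using g1_int[OF ab] by (rule integral_unique)
  have g1i: "g1 integrable_on {a..b}" using g1_int[OF ab] by blast
  have b1: "norm (integral {a..b} (\<lambda>x. EE (phs t s x) * complex_of_real (h1 x))) \<le> M * h1 a" for s
  proof -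
    have "norm (integral {a..b} (\<lambda>x. EE (phs t s x) * complex_of_real (h1 x))) \<le> M * \<bar>h1 b\<bar> + M * integral {a..b} g1"
      unfolding M_def
    proof (rule term_bound[OF t a0 ab h1_deriv cmg1 _ g1i])
      fix x assume "x \<in> {a..b}"
      then show "\<bar>- g1 x\<bar> \<le> g1 x" using g1_nonneg[of x] a0 by auto
    qed
    also have "\<dots> = M * h1 a" unfolding ig1 using h1_pos[of b] by (simp add: algebra_simps)
    finally show ?thesis .
  qed
  have g6i: "(\<lambda>x. 6 * g1 x) integrable_on {a..b}" using g1i by (rule integrable_on_mult_right)
  have b3: "norm (integral {a..b} (\<lambda>x. EE (phs t 0 x) * complex_of_real (h2 r x))) \<le> 6 * M * h1 a"
  proof -
    have "norm (integral {a..b} (\<lambda>x. EE (phs t 0 x) * complex_of_real (h2 r x))) \<le> M * \<bar>h2 r b\<bar> + M * integral {a..b} (\<lambda>x. 6 * g1 x)"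
      unfolding M_def
    proof (rule term_bound[OF t a0 ab h2_deriv h2'_cont _ g6i])
      fix x assume "x \<in> {a..b}"
      then show "\<bar>h2' r x\<bar> \<le> 6 * g1 x" using h2'_bound[of x r] a0 by auto
    qed
    also have "\<dots> = M * \<bar>h2 r b\<bar> + M * (6 * (h1 a - h1 b))" unfolding integral_mult_right ig1 by simp
    also have "\<dots> \<le> M * (2 * h1 b) + M * (6 * (h1 a - h1 b))"
      using h2_bound[of r b] M0 by (intro add_right_mono mult_left_mono) auto
    also have "\<dots> \<le> 6 * M * h1 a"
    proof -
      have "2 * h1 b + 6 * (h1 a - h1 b) \<le> 6 * h1 a" using h1_pos[of b] by simp
      then have "M * (2 * h1 b + 6 * (h1 a - h1 b)) \<le> M * (6 * h1 a)" using M0 by (rule mult_left_mono)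
      then show ?thesis by (simp add: algebra_simps)
    qed
    finally show ?thesis .
  qed
  have i1: "(\<lambda>x. complex_of_real (1/2) * (EE (phs t s x) * complex_of_real (h1 x))) integrable_on {a..b}" for s
    unfolding phs_def by (intro integrable_continuous_interval continuous_intros ch1)
  have i3: "(\<lambda>x. EE (phs t 0 x) * complex_of_real (h2 r x)) integrable_on {a..b}"
    unfolding phs_def by (intro integrable_continuous_interval continuous_intros ch2)
  have "integral {a..b} (QQ t r) = integral {a..b} (\<lambda>x. complex_of_real (1/2) * (EE (phs t (-r) x) * complex_of_real (h1 x))
   + complex_of_real (1/2) * (EE (phs t r x) * complex_of_real (h1 x))
   - EE (phs t 0 x) * complex_of_real (h2 r x))"
    unfolding QQ_decomp[abs_def] ..
  also have "\<dots> = complex_of_real (1/2) * integral {a..b} (\<lambda>x. EE (phs t (-r) x) * complex_of_real (h1 x))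
     + complex_of_real (1/2) * integral {a..b} (\<lambda>x. EE (phs t r x) * complex_of_real (h1 x))
     - integral {a..b} (\<lambda>x. EE (phs t 0 x) * complex_of_real (h2 r x))"
    using integral_diff[OF integrable_add[OF i1 i1] i3] integral_add[OF i1 i1] by simp
  finally have eq: "integral {a..b} (QQ t r) = \<dots>" .
  have "norm (integral {a..b} (QQ t r)) \<le> (1/2) * (M * h1 a) + (1/2) * (M * h1 a) + 6 * M * h1 a"
    unfolding eq
    by (rule order_trans[OF norm_triangle_ineq4] order_trans[OF norm_triangle_ineq] add_mono)+
       (use b1[of "-r"] b1[of r] b3 in \<open>auto simp: norm_mult\<close>)
  also have "\<dots> = 70 / sqrt (2 * t * DD a) * h1 a" unfolding M_def by simp
  finally show ?thesis .
qed


lemma lim_c_over: "((\<lambda>y::real. c / (1 + y)) \<longlongrightarrow> 0) at_top"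
  by (rule tendsto_divide_0[OF tendsto_const], rule filterlim_at_top_imp_at_infinity,
      rule filterlim_tendsto_add_at_top[OF tendsto_const filterlim_ident])

lemma lim_R_DD: "((\<lambda>R. R / DD R) \<longlongrightarrow> 0) at_top"
proof (rule Lim_null_comparison[OF _ lim_c_over[of 1]])
  show "\<forall>\<^sub>F R in at_top. norm (R / DD R) \<le> 1 / (1 + R)"
    using eventually_ge_at_top[of "0::real"]
  proof eventually_elim
    case (elim R)
    have "DD R - R * (1 + R) = ((2 * R - 1)^2 + 3) / 4" unfolding DD_def by (simp add: power2_eq_square field_simps)
    moreover have "((2 * R - 1)^2 + 3) / 4 \<ge> 0" by simp
    ultimately have "R * (1 + R) \<le> DD R" by linarith
    then have "R * (1 + R) / (DD R * (1 + R)) \<le> DD R / (DD R * (1 + R))"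
      using elim DD_pos[of R] by (intro divide_right_mono) auto
    moreover have "R * (1 + R) / (DD R * (1 + R)) = R / DD R" using elim by simp
    moreover have "DD R / (DD R * (1 + R)) = 1 / (1 + R)" using DD_pos[of R] by simp
    ultimately show ?case using elim DD_pos[of R] by simp
  qed
qed

definition maj :: "real \<Rightarrow> real" where "maj x = 6 / (1 + x)^2"

lemma maj_int: "maj integrable_on {0..}"
proof -
  have F: "(maj has_integral (6 - 6 / (1 + y))) {0..y}" if y: "y \<ge> 0" for y
  proof -
    have "(maj has_integral ((\<lambda>x. - 6 / (1 + x)) y - (\<lambda>x. - 6 / (1 + x)) 0)) {0..y}"
    proof (rule fundamental_theorem_of_calculus[OF y])
      fix x assume x: "x \<in> {0..y}"
      have "((\<lambda>x. - 6 / (1 + x)) has_real_derivative maj x) (at x within {0..y})"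
        using x unfolding maj_def by (auto intro!: derivative_eq_intros simp: power2_eq_square)
      then show "((\<lambda>x. - 6 / (1 + x)) has_vector_derivative maj x) (at x within {0..y})"
        by (simp add: has_real_derivative_iff_has_vector_derivative)
    qed
    then show ?thesis by simp
  qed
  have "(maj has_integral 6) {0..}"
  proof (rule has_integral_to_inf)
    fix y :: real
    show "maj integrable_on {0..y}"
    proof (cases "y \<ge> 0")
      case True then show ?thesis using F by blast
    next
      case False then show ?thesis by (simp add: integrable_on_empty)
    qed
  next
    have ev: "\<forall>\<^sub>F y in at_top. integral {0..y} maj = 6 - 6 / (1 + y)"
    proof (rule eventually_mono[OF eventually_ge_at_top[of "0::real"]])
      fix y :: real assume "0 \<le> y"
      then show "integral {0..y} maj = 6 - 6 / (1 + y)" by (rule integral_unique[OF F])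
    qed
    have "((\<lambda>y::real. 6 - 6 / (1 + y)) \<longlongrightarrow> 6 - 0) at_top"
      by (intro tendsto_diff tendsto_const lim_c_over)
    then have lim: "((\<lambda>y::real. 6 - 6 / (1 + y)) \<longlongrightarrow> 6) at_top" by simp
    show "((\<lambda>y. integral {0..y} maj) \<longlongrightarrow> 6) at_top"
      using tendsto_cong[OF ev] lim by simp
  next
    fix y :: real assume "y \<ge> 0" then show "maj y \<ge> 0" unfolding maj_def by simp
  qed
  then show ?thesis by blast
qed

lemma QQ_maj: "x \<ge> 0 \<Longrightarrow> norm (QQ t r x) \<le> maj x"
proof -
  assume x: "x \<ge> 0"
  have "norm (QQ t r x) = \<bar>ww' r x\<bar>" unfolding QQ_def by (simp add: norm_mult)
  also have "\<dots> \<le> 3 / DD x" by (rule ww'_bound)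
  also have "\<dots> \<le> maj x"
  proof -
    have "2 * DD x - (1 + x)^2 = (x - 1)^2 + 2 * x^2" unfolding DD_def by (simp add: power2_eq_square algebra_simps)
    then have le: "(1 + x)^2 \<le> 2 * DD x" using zero_le_power2[of "x - 1"] zero_le_power2[of x] by linarith
    have "3 / DD x = 6 / (2 * DD x)" by simp
    also have "\<dots> \<le> 6 / (1 + x)^2" using le x DD_pos[of x] by (intro divide_left_mono) (auto intro!: mult_pos_pos)
    finally show ?thesis unfolding maj_def .
  qed
  finally show ?thesis .
qed

lemma QQ_abs_int: "QQ t r absolutely_integrable_on {0..}"
proof (rule measurable_bounded_by_integrable_imp_absolutely_integrable)
  show "{0::real..} \<in> sets lebesgue" by simp
  show "QQ t r \<in> borel_measurable (lebesgue_on {0..})"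
    by (rule continuous_imp_measurable_on_sets_lebesgue[OF QQ_cont]) simp
  show "maj integrable_on {0..}" by (rule maj_int)
  fix x :: real assume "x \<in> {0..}" then show "norm (QQ t r x) \<le> maj x" using QQ_maj by auto
qed

lemma QQ_lim: "\<exists>K. ((\<lambda>b. integral {0..b} (QQ t r)) \<longlongrightarrow> K) at_top"
proof -
  have si: "set_integrable lebesgue {0..} (QQ t r)" using QQ_abs_int .
  have lim: "((\<lambda>b. set_lebesgue_integral lebesgue {0..b} (QQ t r)) \<longlongrightarrow> set_lebesgue_integral lebesgue {0..} (QQ t r)) at_top"
    by (rule tendsto_set_lebesgue_integral_at_top[OF _ si]) simp
  have "set_lebesgue_integral lebesgue {0..b} (QQ t r) = integral {0..b} (QQ t r)" for b
    by (rule set_lebesgue_integral_eq_integral(2), rule set_integrable_subset[OF si]) auto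
  then show ?thesis using lim by auto
qed


lemma osc_fun: "osc_integrand t r = (\<lambda>\<eta>. \<i> / complex_of_real pi * (EE (t * (\<eta>^4 + \<eta>^2)) * complex_of_real (\<eta> * sr r \<eta>)))"
  by (rule ext, rule osc_eq)

lemma osc_cont: "continuous_on S (osc_integrand t r)"
  unfolding osc_fun by (intro continuous_intros)

lemma osc_norm: "norm (osc_integrand t r \<eta>) = \<bar>\<eta> * sr r \<eta>\<bar> / pi"
  unfolding osc_eq by (simp add: norm_mult norm_divide abs_mult)

lemma osc_small: "0 \<le> \<eta> \<Longrightarrow> \<eta> \<le> a \<Longrightarrow> norm (osc_integrand t r \<eta>) \<le> a^2 / pi"
proof -
  assume e: "0 \<le> \<eta>" "\<eta> \<le> a"
  have "\<bar>\<eta> * sr r \<eta>\<bar> \<le> \<eta> * \<eta>"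
    using sr_bound[of r \<eta>] e by (simp add: abs_mult mult_left_mono)
  also have "\<dots> \<le> a^2" using e by (simp add: power2_eq_square mult_mono)
  finally show ?thesis unfolding osc_norm by (simp add: divide_right_mono)
qed

lemma PP_norm: "norm (PP t r x) = \<bar>ww r x\<bar>"
  unfolding PP_def by (simp add: norm_mult)

lemma PP_0: "PP t r 0 = 0" unfolding PP_def ww_def by simp

lemma PP_lim: "(PP t r \<longlongrightarrow> 0) at_top"
proof (rule Lim_null_comparison[OF _ lim_R_DD])
  show "\<forall>\<^sub>F R in at_top. norm (PP t r R) \<le> R / DD R"
    by (rule eventually_mono[OF eventually_ge_at_top[of "0::real"]]) (simp add: PP_norm ww_bound)
qed

lemma main_bound:
  assumes t: "t > 0" and a0: "0 \<le> a"
  shows "\<exists>I. ((\<lambda>R. integral {0..R} (osc_integrand t r)) \<longlongrightarrow> I) at_top \<and>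
    norm I \<le> a^3 / pi + 1 / (2 * pi * t) * (a / DD a + 70 / sqrt (2 * t * DD a) * h1 a)"
proof -
  define A where "A = a^3 / pi + 1 / (2 * pi * t) * (a / DD a + 70 / sqrt (2 * t * DD a) * h1 a)"
  obtain K where K: "((\<lambda>b. integral {0..b} (QQ t r)) \<longlongrightarrow> K) at_top" using QQ_lim by blast
  define c where "c = complex_of_real (- 1 / (2 * pi * t))"
  have t0: "t \<noteq> 0" using t by simp
  have ev: "\<forall>\<^sub>F R in at_top. c * ((PP t r R - 0) - integral {0..R} (QQ t r)) = integral {0..R} (osc_integrand t r)"
  proof (rule eventually_mono[OF eventually_ge_at_top[of "0::real"]])
    fix R :: real assume R: "0 \<le> R"
    show "c * ((PP t r R - 0) - integral {0..R} (QQ t r)) = integral {0..R} (osc_integrand t r)"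
      unfolding c_def osc_ibp[OF t0 R, of r] PP_0 ..
  qed
  have "((\<lambda>R. c * ((PP t r R - 0) - integral {0..R} (QQ t r))) \<longlongrightarrow> c * ((0 - 0) - K)) at_top"
    by (intro tendsto_intros PP_lim K)
  then have lim: "((\<lambda>R. integral {0..R} (osc_integrand t r)) \<longlongrightarrow> c * ((0 - 0) - K)) at_top"
    using tendsto_cong[OF ev] by simp
  have cn: "norm c = 1 / (2 * pi * t)" unfolding c_def norm_of_real using t pi_gt_zero by (simp add: abs_div abs_mult)
  have bnd: "\<forall>\<^sub>F R in at_top. norm (integral {0..R} (osc_integrand t r)) \<le> A + 1 / (2 * pi * t) * (R / DD R)"
  proof (rule eventually_mono[OF eventually_ge_at_top[of a]])
    fix R assume aR: "a \<le> R"
    have int: "osc_integrand t r integrable_on {0..R}"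
      by (rule integrable_continuous_interval, rule osc_cont)
    have split: "integral {0..a} (osc_integrand t r) + integral {a..R} (osc_integrand t r) = integral {0..R} (osc_integrand t r)"
      by (rule Henstock_Kurzweil_Integration.integral_combine[OF a0 aR int])
    have n0: "norm (integral {0..a} (osc_integrand t r)) \<le> a^2 / pi * (a - 0)"
      by (rule integral_bound[OF a0 osc_cont]) (auto intro: osc_small)
    have n0': "a^2 / pi * (a - 0) = a^3 / pi" by (simp add: power3_eq_cube power2_eq_square)
    have tr1: "norm ((PP t r R - PP t r a) - integral {a..R} (QQ t r)) \<le> norm (PP t r R - PP t r a) + norm (integral {a..R} (QQ t r))"
      by (rule norm_triangle_ineq4)
    have tr2: "norm (PP t r R - PP t r a) \<le> norm (PP t r R) + norm (PP t r a)"
      by (rule norm_triangle_ineq4)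
    have "norm ((PP t r R - PP t r a) - integral {a..R} (QQ t r)) \<le> norm (PP t r R) + norm (PP t r a) + norm (integral {a..R} (QQ t r))"
      using tr1 tr2 by linarith
    also have "\<dots> \<le> R / DD R + a / DD a + 70 / sqrt (2 * t * DD a) * h1 a"
      using ww_bound[of R r] ww_bound[of a r] a0 aR QQ_bound[OF t a0 aR, of r]
      unfolding PP_norm by (intro add_mono) auto
    finally have n1': "norm ((PP t r R - PP t r a) - integral {a..R} (QQ t r)) \<le> R / DD R + a / DD a + 70 / sqrt (2 * t * DD a) * h1 a" .
    have n1: "norm (integral {a..R} (osc_integrand t r)) \<le> 1 / (2 * pi * t) * (R / DD R + a / DD a + 70 / sqrt (2 * t * DD a) * h1 a)"
      unfolding osc_ibp[OF t0 aR] c_def[symmetric] norm_mult cn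
      using n1' t by (intro mult_left_mono) auto
    have "norm (integral {0..R} (osc_integrand t r)) \<le> norm (integral {0..a} (osc_integrand t r)) + norm (integral {a..R} (osc_integrand t r))"
      unfolding split[symmetric] by (rule norm_triangle_ineq)
    also have "\<dots> \<le> a^3 / pi + 1 / (2 * pi * t) * (R / DD R + a / DD a + 70 / sqrt (2 * t * DD a) * h1 a)"
      using n0 n0' n1 by linarith
    also have "\<dots> = A + 1 / (2 * pi * t) * (R / DD R)" unfolding A_def by (simp add: algebra_simps)
    finally show "norm (integral {0..R} (osc_integrand t r)) \<le> A + 1 / (2 * pi * t) * (R / DD R)" .
  qed
  have lb: "((\<lambda>R. A + 1 / (2 * pi * t) * (R / DD R)) \<longlongrightarrow> A + 1 / (2 * pi * t) * 0) at_top"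
    by (intro tendsto_intros lim_R_DD)
  have "norm (c * ((0 - 0) - K)) \<le> A + 1 / (2 * pi * t) * 0"
    by (rule tendsto_le[OF trivial_limit_at_top_linorder lb tendsto_norm[OF lim] bnd])
  then show ?thesis using lim unfolding A_def by auto
qed


lemma large_t_arith:
  assumes t: "t > 0"
  shows "0^3 / pi + 1 / (2 * pi * t) * (0 / DD 0 + 70 / sqrt (2 * t * DD 0) * h1 0) \<le> 100 * t powr (-3/2)"
proof -
  have p: "t powr (-3/2) = 1 / (t * sqrt t)"
  proof -
    have e: "(3/2::real) = 1 + 1/2" by simp
    have e2: "(-3/2::real) = - (3/2)" by simp
    have q1: "t powr 1 = t" by (rule powr_one) (use t in simp)
    have q2: "t powr (1/2) = sqrt t" by (rule powr_half_sqrt) (use t in simp)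
    have h: "t powr (3/2) = t * sqrt t" unfolding e powr_add q1 q2 ..
    show ?thesis unfolding e2 powr_minus h by (rule inverse_eq_divide)
  qed
  have st: "sqrt t > 0" using t by simp
  have s2: "sqrt (2 * t) \<ge> sqrt t" using t by simp
  have tp: "1 * t \<le> (2 * pi) * t" using t pi_gt3 by (intro mult_right_mono) auto
  have m1: "1 / (2 * pi * t) \<le> 1 / t"
    by (rule divide_left_mono) (use tp t pi_gt3 in \<open>auto intro!: mult_pos_pos\<close>)
  have m2: "70 / sqrt (2 * t) \<le> 70 / sqrt t"
    by (rule divide_left_mono) (use s2 st t in \<open>auto intro!: mult_pos_pos\<close>)
  have m0: "0 \<le> 70 / sqrt (2 * t)" using t by simp
  have "1 / (2 * pi * t) * (70 / sqrt (2 * t)) \<le> 1 / t * (70 / sqrt t)"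
    by (rule mult_mono[OF m1 m2]) (use t in simp_all)
  also have "\<dots> = 70 / (t * sqrt t)" by simp
  also have "\<dots> \<le> 100 / (t * sqrt t)" using t st by (intro divide_right_mono) auto
  finally show ?thesis unfolding p by (simp add: DD_def h1_def)
qed

lemma small_t_arith:
  assumes u: "u > 0"
  shows "(1/u)^3 / pi + 1 / (2 * pi * u^4) * ((1/u) / DD (1/u) + 70 / sqrt (2 * u^4 * DD (1/u)) * h1 (1/u)) \<le> 100 / u^3"
proof -
  define a where "a = 1 / u"
  have a: "a > 0" unfolding a_def using u by simp
  have D: "DD a > 0" by (rule DD_pos)
  have Da: "DD a \<ge> 2 * a^2" unfolding DD_def by simp
  have a2: "2 * a^2 > 0" using a by simp
  have f1: "a^3 / pi \<le> 1 / u^3"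
  proof -
    have "a^3 / pi \<le> a^3 / 1" using a pi_gt3 by (intro divide_left_mono) auto
    then show ?thesis unfolding a_def by (simp add: power_one_over)
  qed
  have f2: "a / DD a \<le> u / 2"
  proof -
    have "a / DD a \<le> a / (2 * a^2)" using Da a a2 D by (intro divide_left_mono) (auto intro!: mult_pos_pos)
    also have "\<dots> = u / 2" unfolding a_def using u by (simp add: power2_eq_square field_simps)
    finally show ?thesis .
  qed
  have f3: "h1 a \<le> u^2 / 2"
  proof -
    have "h1 a \<le> 1 / (2 * a^2)" unfolding h1_def using Da a2 D a by (intro divide_left_mono) (auto intro!: mult_pos_pos)
    also have "\<dots> = u^2 / 2" unfolding a_def using u by (simp add: power2_eq_square field_simps)
    finally show ?thesis .
  qed
  have f4: "sqrt (2 * u^4 * DD a) \<ge> 2 * u"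
  proof -
    have ua: "u^4 * a^2 = u^2" unfolding a_def power4_eq_xxxx power2_eq_square using u by simp
    have "2 * u^4 * (2 * a^2) = 4 * (u^4 * a^2)" by simp
    also have "\<dots> = (2 * u)^2" unfolding ua by (simp add: power2_eq_square)
    finally have "2 * u^4 * (2 * a^2) = (2 * u)^2" .
    moreover have "2 * u^4 * (2 * a^2) \<le> 2 * u^4 * DD a" using Da u by (intro mult_left_mono) auto
    ultimately have "(2 * u)^2 \<le> 2 * u^4 * DD a" by simp
    then have A: "sqrt ((2 * u)^2) \<le> sqrt (2 * u^4 * DD a)" by (rule real_sqrt_le_mono)
    have B: "sqrt ((2 * u)^2) = 2 * u" unfolding real_sqrt_abs using u by simp
    show ?thesis using A unfolding B .
  qed
  have f5: "70 / sqrt (2 * u^4 * DD a) \<le> 35 / u"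
  proof -
    have sp: "sqrt (2 * u^4 * DD a) > 0" using f4 u by linarith
    have "70 / sqrt (2 * u^4 * DD a) \<le> 70 / (2 * u)" using f4 u sp by (intro divide_left_mono) (auto intro!: mult_pos_pos)
    then show ?thesis by simp
  qed
  have f6: "70 / sqrt (2 * u^4 * DD a) * h1 a \<le> 35 / u * (u^2 / 2)"
    using f5 f3 h1_pos[of a] u by (intro mult_mono) auto
  have f6': "35 / u * (u^2 / 2) = 35 * u / 2" using u by (simp add: power2_eq_square)
  have f7: "a / DD a + 70 / sqrt (2 * u^4 * DD a) * h1 a \<le> 18 * u"
  proof -
    have "a / DD a + 70 / sqrt (2 * u^4 * DD a) * h1 a \<le> u / 2 + 35 * u / 2"
      using add_mono[OF f2 f6] unfolding f6' .
    also have "u / 2 + 35 * u / 2 = 18 * u" by simp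
    finally show ?thesis .
  qed
  have S0: "0 \<le> a / DD a + 70 / sqrt (2 * u^4 * DD a) * h1 a"
    using a D h1_pos[of a] u by (intro add_nonneg_nonneg mult_nonneg_nonneg) auto
  have f8: "1 / (2 * pi * u^4) * (a / DD a + 70 / sqrt (2 * u^4 * DD a) * h1 a) \<le> 1 / u^4 * (18 * u)"
  proof (rule mult_mono[OF _ f7 _ S0])
    show "1 / (2 * pi * u^4) \<le> 1 / u^4" using u pi_gt3 by (intro divide_left_mono) auto
  qed (use u in auto)
  have u4: "u^4 = u^3 * u" by (simp add: power3_eq_cube power4_eq_xxxx)
  have f9: "1 / u^4 * (18 * u) = 18 / u^3" unfolding u4 using u by simp
  have "a^3 / pi + 1 / (2 * pi * u^4) * (a / DD a + 70 / sqrt (2 * u^4 * DD a) * h1 a) \<le> 1 / u^3 + 18 / u^3"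
    using f1 f8 f9 by linarith
  also have "\<dots> \<le> 100 / u^3" using u by (simp add: divide_right_mono)
  finally show ?thesis unfolding a_def .
qed


lemma quarter_facts:
  fixes t :: real
  assumes t: "t > 0"
  shows "(t powr (1/4))^4 = t" "t powr (-3/4) = 1 / (t powr (1/4))^3" "t powr (1/4) > 0"
proof -
  define u where "u = t powr (1/4)"
  have u: "u > 0" unfolding u_def using t by simp
  have "u^4 = u powr (real 4)" using u by (simp add: powr_realpow)
  also have "\<dots> = t powr (1/4 * real 4)" unfolding u_def by (rule powr_powr)
  also have "\<dots> = t" using t by simp
  finally show "(t powr (1/4))^4 = t" unfolding u_def .
  have "u^3 = u powr (real 3)" using u by (simp add: powr_realpow)
  also have "\<dots> = t powr (1/4 * real 3)" unfolding u_def by (rule powr_powr)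
  also have "\<dots> = t powr (3/4)" by simp
  finally have u3: "u^3 = t powr (3/4)" .
  have e2: "(-3/4::real) = - (3/4)" by simp
  show "t powr (-3/4) = 1 / (t powr (1/4))^3"
    unfolding e2 powr_minus u_def[symmetric] u3 by (rule inverse_eq_divide)
  show "t powr (1/4) > 0" using u unfolding u_def .
qed

lemma large_case:
  fixes t :: real and x y :: "real^3"
  assumes t1: "t > 1"
  shows "\<exists>I::complex. ((\<lambda>R. integral {0..R} (osc_integrand t (dist x y))) \<longlongrightarrow> I) at_top \<and> norm I \<le> 100 * t powr (-3/2)"
proof -
  have t: "t > 0" using t1 by simp
  obtain I where I: "((\<lambda>R. integral {0..R} (osc_integrand t (dist x y))) \<longlongrightarrow> I) at_top"
    and nI: "norm I \<le> 0^3 / pi + 1 / (2 * pi * t) * (0 / DD 0 + 70 / sqrt (2 * t * DD 0) * h1 0)"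
    using main_bound[OF t order_refl, of "dist x y"] by blast
  have "norm I \<le> 100 * t powr (-3/2)" using nI large_t_arith[OF t] by linarith
  then show ?thesis using I by blast
qed

lemma small_case:
  fixes t :: real and x y :: "real^3"
  assumes tt0: "0 < t \<and> t \<le> 1"
  shows "\<exists>I::complex. ((\<lambda>R. integral {0..R} (osc_integrand t (dist x y))) \<longlongrightarrow> I) at_top \<and> norm I \<le> 100 * t powr (-3/4)"
proof -
  have t: "t > 0" using tt0 by simp
  define u where "u = t powr (1/4)"
  note q = quarter_facts[OF t, folded u_def]
  have a0: "0 \<le> 1 / u" using q(3) by simp
  obtain I where I: "((\<lambda>R. integral {0..R} (osc_integrand t (dist x y))) \<longlongrightarrow> I) at_top"
    and nI: "norm I \<le> (1/u)^3 / pi + 1 / (2 * pi * t) * ((1/u) / DD (1/u) + 70 / sqrt (2 * t * DD (1/u)) * h1 (1/u))"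
    using main_bound[OF t a0, of "dist x y"] by blast
  have tt: "t = u^4" using q(1) by simp
  have nI': "norm I \<le> (1/u)^3 / pi + 1 / (2 * pi * u^4) * ((1/u) / DD (1/u) + 70 / sqrt (2 * u^4 * DD (1/u)) * h1 (1/u))"
    using nI by (simp only: tt)
  have "norm I \<le> 100 / u^3"
    using nI' small_t_arith[OF q(3)] by linarith
  also have "\<dots> = 100 * t powr (-3/4)" unfolding q(2) by simp
  finally show ?thesis using I by blast
qed

theorem proposition2p1:
  shows "\<exists>C::real.
    (\<forall>t::real. t > 1 \<longrightarrow> (\<forall>x y :: real^3. \<exists>I::complex.
        ((\<lambda>R. integral {0..R} (osc_integrand t (dist x y))) \<longlongrightarrow> I) at_top
        \<and> norm I \<le> C * t powr (-3/2))) \<and>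
    (\<forall>t::real. 0 < t \<and> t \<le> 1 \<longrightarrow> (\<forall>x y :: real^3. \<exists>I::complex.
        ((\<lambda>R. integral {0..R} (osc_integrand t (dist x y))) \<longlongrightarrow> I) at_top
        \<and> norm I \<le> C * t powr (-3/4)))"
  using large_case small_case by blast

end
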